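(* Let $(f_0, M_0, \Lambda_0, \mathcal{Q}_0)$ be a SIMDG with training distribution $P_{\mathrm{tr}}$ as described in the context, let $q=\mathrm{rank}(M_0)$ and $R$, $\gamma_0$, $f_\star$ be as in the context, and take $\mathcal{F}$ and $\mathcal{G}$ to be the classes of all measurable functions $\mathbb{R}^p\to\mathbb{R}$. Then the BCF $f_\star$ is identifiable from $P_{\mathrm{tr}}$ (with respect to $\mathcal{F}$ and $\mathcal{G}$) if and only if for all measurable functions $h,g:\mathbb{R}^p\to\mathbb{R}$ the following holds: if $h(X)+g(V)=0$ $P_{\mathrm{tr}}$-a.s., then - if $q<p$: there exists $\delta:\mathbb{R}^{p-q}\to\mathbb{R}$ such that $h(X)=\delta(R^\top X)$ $P_{\mathrm{tr}}$-a.s.; - if $q=p$: there exists $c\in\mathbb{R}$ such that $h(X)=c$ $P_{\mathrm{tr}}$-a.s.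
   Context: Fix integers $p,r\ge 1$. A SIMDG is a tuple $(f_0, M_0, \Lambda_0, \mathcal{Q}_0)$ where $f_0:\mathbb{R}^p\to\mathbb{R}$ is measurable, $M_0\in\mathbb{R}^{p\times r}$, $\Lambda_0$ is a distribution on $\mathbb{R}^{1+p}$ such that $(U,V)\sim\Lambda_0$ satisfies $\mathrm{E}[(U,V)]=0$ and $\mathrm{E}[\|(U,V)\|_2^2]<\infty$, and $\mathcal{Q}_0$ is a set of distributions on $\mathbb{R}^r$. For each $Q\in\mathcal{Q}_0$ the model induces a distribution $P$ of $(U,V,X,Y,Z)$ by drawing $((U,V),Z)\sim\Lambda_0\otimes Q$ and setting $X = M_0 Z + V$, $Y = f_0(X)+U$; $\mathcal{P}_0$ is the set of all such induced distributions. Standing setting: $\sup_{P\in\mathcal{P}_0}\mathrm{E}_P[f_0(X)]^2<\infty$; $Q_{\mathrm{tr}}\in\mathcal{Q}_0$ satisfies $\mathrm{E}_{Q_{\mathrm{tr}}}[Z]=0$ and $\mathrm{E}_{Q_{\mathrm{tr}}}[ZZ^\top]\succ 0$; $P_{\mathrm{tr}}$ is the distribution induced by $Q_{\mathrm{tr}}$. Let $q=\mathrm{rank}(M_0)$; if $q<p$, $R\in\mathbb{R}^{p\times(p-q)}$ is a matrix whose columns form an orthonormal basis of $\ker(M_0^\top)$, and if $q=p$, $R$ is the zero vector in $\mathbb{R}^{p\times 1}$. Define the control function $\gamma_0(v):=\mathrm{E}_{P_{\mathrm{tr}}}[U\mid V=v]$. The boosted control function (BCF) is defined for $P_{\mathrm{tr}}$-a.e.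 $x$ by $f_\star(x):=f_0(x)+\mathrm{E}_{P_{\mathrm{tr}}}[\gamma_0(V)\mid R^\top X = R^\top x]$ (so $f_\star=f_0$ when $q=p$). Identifiability: given classes $\mathcal{F},\mathcal{G}$ of measurable functions with $f_0\in\mathcal{F}$, $\gamma_0\in\mathcal{G}$, the BCF is identifiable from $P_{\mathrm{tr}}$ (w.r.t. $\mathcal{F},\mathcal{G}$) if for all $f\in\mathcal{F}$, $\gamma\in\mathcal{G}$: whenever $\mathrm{E}_{P_{\mathrm{tr}}}[Y\mid X,V]=f(X)+\gamma(V)$ $P_{\mathrm{tr}}$-a.s., then $f_\star(X)=f(X)+\mathrm{E}_{P_{\mathrm{tr}}}[\gamma(V)\mid R^\top X]$ $P_{\mathrm{tr}}$-a.s. if $q<p$, and $f_\star(X)=f(X)+\mathrm{E}_{P_{\mathrm{tr}}}[\gamma(V)]$ $P_{\mathrm{tr}}$-a.s. if $q=p$. *)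

theory Defs
  imports "HOL-Analysis.Analysis" "HOL-Probability.Probability"
begin

(* Vectors in R^p / R^r are real^'p / real^'r; M0 is a p x r matrix real^'r^'p.
   The sample space of the model is ((U,V),Z) :: (real * real^'p) * real^'r
   with law Lambda0 (x) Q (product measure). *)

type_synonym ('p,'r) sample = "(real \<times> (real^('p::finite))) \<times> (real^('r::finite))"

definition simU :: "('p,'r) sample \<Rightarrow> real" where
  "simU \<omega> = fst (fst \<omega>)"

definition simV :: "('p,'r) sample \<Rightarrow> real^'p" where
  "simV \<omega> = snd (fst \<omega>)"

definition simZ :: "('p,'r) sample \<Rightarrow> real^'r" where
  "simZ \<omega> = snd \<omega>"

definition simX :: "real^'r^'p \<Rightarrow> ('p,'r) sample \<Rightarrow> real^'p" where
  "simX M0 \<omega> = M0 *v simZ \<omega> + simV \<omega>"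

definition simY :: "(real^'p \<Rightarrow> real) \<Rightarrow> real^'r^'p \<Rightarrow> ('p,'r) sample \<Rightarrow> real" where
  "simY f0 M0 \<omega> = f0 (simX M0 \<omega>) + simU \<omega>"

definition induced :: "(real \<times> (real^'p)) measure \<Rightarrow> (real^'r) measure \<Rightarrow> ('p,'r) sample measure" where
  "induced \<Lambda>0 Q = \<Lambda>0 \<Otimes>\<^sub>M Q"

definition SIMDG :: "(real^'p \<Rightarrow> real) \<Rightarrow> real^'r^'p \<Rightarrow> (real \<times> (real^'p)) measure \<Rightarrow> (real^'r) measure set \<Rightarrow> bool" where
  "SIMDG f0 M0 \<Lambda>0 Q0 \<longleftrightarrow>
     f0 \<in> borel_measurable borel \<and>
     prob_space \<Lambda>0 \<and> sets \<Lambda>0 = sets borel \<and>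
     integrable \<Lambda>0 (\<lambda>w. norm w ^ 2) \<and>
     integrable \<Lambda>0 (\<lambda>w. w) \<and> (\<integral>w. w \<partial>\<Lambda>0) = 0 \<and>
     (\<forall>Q\<in>Q0. prob_space Q \<and> sets Q = sets borel)"

definition sup_second_moment_finite :: "(real^'p \<Rightarrow> real) \<Rightarrow> real^'r^'p \<Rightarrow> (real \<times> (real^'p)) measure \<Rightarrow> (real^'r) measure set \<Rightarrow> bool" where
  "sup_second_moment_finite f0 M0 \<Lambda>0 Q0 \<longleftrightarrow>
     (SUP Q\<in>Q0. (\<integral>\<^sup>+ \<omega>. ennreal ((f0 (simX M0 \<omega>))\<^sup>2) \<partial>induced \<Lambda>0 Q)) < \<infinity>"

definition second_moment_matrix :: "(real^'r) measure \<Rightarrow> real^'r^'r" where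
  "second_moment_matrix Q = (\<chi> i j. \<integral>z. z $ i * z $ j \<partial>Q)"

definition pos_def :: "(real^'n^'n) \<Rightarrow> bool" where
  "pos_def A \<longleftrightarrow> (\<forall>a. a \<noteq> 0 \<longrightarrow> a \<bullet> (A *v a) > 0)"

definition training_distribution :: "(real^'r) measure \<Rightarrow> bool" where
  "training_distribution Q \<longleftrightarrow>
     integrable Q (\<lambda>z. norm z ^ 2) \<and> integrable Q (\<lambda>z. z) \<and>
     (\<integral>z. z \<partial>Q) = 0 \<and> pos_def (second_moment_matrix Q)"

text \<open>R^T x is the vector (R j \<bullet> x)_(j < p-q) in R^(p-q), represented as an extensional
  function on {..<p-q}.\<close>
definition kerT :: "real^'r^'p \<Rightarrow> (real^'p) set" where
  "kerT M0 = {x. transpose M0 *v x = 0}"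

definition ker_onb :: "real^'r^'p \<Rightarrow> (nat \<Rightarrow> real^'p) \<Rightarrow> bool" where
  "ker_onb M0 R \<longleftrightarrow>
     (let n = CARD('p) - rank M0 in
       (\<forall>j<n. R j \<in> kerT M0) \<and>
       (\<forall>i<n. \<forall>j<n. R i \<bullet> R j = (if i = j then 1 else 0)) \<and>
       span (R ` {..<n}) = kerT M0)"

definition RT :: "real^'r^'p \<Rightarrow> (nat \<Rightarrow> real^'p) \<Rightarrow> real^'p \<Rightarrow> (nat \<Rightarrow> real)" where
  "RT M0 R x = (\<lambda>j\<in>{..<CARD('p) - rank M0}. R j \<bullet> x)"

definition RT_space :: "real^'r^'p \<Rightarrow> (nat \<Rightarrow> real) measure" where
  "RT_space M0 = (\<Pi>\<^sub>M j\<in>{..<CARD('p) - rank M0}. borel)"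

definition sigma_XV :: "real^'r^'p \<Rightarrow> ('p,'r) sample measure \<Rightarrow> ('p,'r) sample measure" where
  "sigma_XV M0 P = vimage_algebra (space P) (\<lambda>\<omega>. (simX M0 \<omega>, simV \<omega>)) borel"

definition sigma_V :: "('p::finite,'r::finite) sample measure \<Rightarrow> ('p,'r) sample measure" where
  "sigma_V P = vimage_algebra (space P) simV borel"

definition sigma_RX :: "real^'r^'p \<Rightarrow> (nat \<Rightarrow> real^'p) \<Rightarrow> ('p,'r) sample measure \<Rightarrow> ('p,'r) sample measure" where
  "sigma_RX M0 R P = vimage_algebra (space P) (\<lambda>\<omega>. RT M0 R (simX M0 \<omega>)) (RT_space M0)"

definition gamma0V :: "('p::finite,'r::finite) sample measure \<Rightarrow> ('p,'r) sample \<Rightarrow> real" where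
  "gamma0V P = real_cond_exp P (sigma_V P) simU"

definition fstarX :: "(real^'p \<Rightarrow> real) \<Rightarrow> real^'r^'p \<Rightarrow> (nat \<Rightarrow> real^'p) \<Rightarrow> ('p,'r) sample measure \<Rightarrow> ('p,'r) sample \<Rightarrow> real" where
  "fstarX f0 M0 R P \<omega> =
     f0 (simX M0 \<omega>) + (if rank M0 < CARD('p) then real_cond_exp P (sigma_RX M0 R P) (gamma0V P) \<omega> else 0)"

text \<open>Identifiability of the BCF from P_tr w.r.t. F = all measurable f and
  G = all measurable gamma with gamma(V) P_tr-integrable (needed for E[gamma(V)|R^T X] and
  E[gamma(V)] to be defined).\<close>
definition BCF_identifiable :: "(real^'p \<Rightarrow> real) \<Rightarrow> real^'r^'p \<Rightarrow> (nat \<Rightarrow> real^'p) \<Rightarrow> ('p,'r) sample measure \<Rightarrow> bool" where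
  "BCF_identifiable f0 M0 R P \<longleftrightarrow>
     (\<forall>f \<in> borel_measurable (borel :: (real^'p) measure).
      \<forall>\<gamma> \<in> borel_measurable (borel :: (real^'p) measure).
        integrable P (\<lambda>\<omega>. \<gamma> (simV \<omega>)) \<longrightarrow>
        (AE \<omega> in P. real_cond_exp P (sigma_XV M0 P) (simY f0 M0) \<omega> = f (simX M0 \<omega>) + \<gamma> (simV \<omega>)) \<longrightarrow>
        (if rank M0 < CARD('p) then
           (AE \<omega> in P. fstarX f0 M0 R P \<omega> = f (simX M0 \<omega>) + real_cond_exp P (sigma_RX M0 R P) (\<lambda>\<omega>'. \<gamma> (simV \<omega>')) \<omega>)
         else
           (AE \<omega> in P. fstarX f0 M0 R P \<omega> = f (simX M0 \<omega>) + (\<integral>\<omega>'. \<gamma> (simV \<omega>') \<partial>P))))"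

end

theory Submission
  imports Defs
begin


lemma inner_sigma_compact:
  fixes M::"'a::{second_countable_topology, complete_space} measure"
  assumes sb: "sets M = sets borel" and fin: "finite_measure M" and B: "B \<in> sets borel"
  shows "\<exists>K::nat \<Rightarrow> 'a set. (\<forall>n. compact (K n) \<and> K n \<subseteq> B) \<and> B - (\<Union>n. K n) \<in> null_sets M"
proof -
  interpret finite_measure M by fact
  have BM: "B \<in> sets M" using B sb by simp
  have ex: "\<exists>K. compact K \<and> K \<subseteq> B \<and> measure M B - e < measure M K" if e: "e > 0" for e
  proof (cases "measure M B - e < 0")
    case True then show ?thesis by (intro exI[of _ "{}"]) auto
  next
    case False
    have "ennreal (measure M B - e) < ennreal (measure M B)"
      using False e by (subst ennreal_less_iff) auto
    also have "\<dots> = emeasure M B" using BM by (simp add: emeasure_eq_measure)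
    also have "\<dots> = (SUP K \<in> {K. K \<subseteq> B \<and> compact K}. emeasure M K)"
      by (rule inner_regular[OF sb _ B]) simp
    finally obtain K where K: "K \<subseteq> B" "compact K" "ennreal (measure M B - e) < emeasure M K"
      by (auto simp: less_SUP_iff)
    have "K \<in> sets M" using K(2) sb by (simp add: borel_compact)
    then have "ennreal (measure M B - e) < ennreal (measure M K)" using K(3) by (simp add: emeasure_eq_measure)
    then have "measure M B - e < measure M K" using False by (subst (asm) ennreal_less_iff) auto
    with K show ?thesis by blast
  qed
  then have "\<forall>n::nat. \<exists>K. compact K \<and> K \<subseteq> B \<and> measure M B - 1 / (Suc n) < measure M K"
    by simp
  then obtain K where K: "\<And>n. compact (K n) \<and> K n \<subseteq> B \<and> measure M B - 1 / (Suc n) < measure M (K n)"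
    by metis
  have Ks: "K n \<in> sets M" for n using K[of n] sb by (simp add: borel_compact)
  define C where "C = (\<Union>n. K n)"
  have CM: "C \<in> sets M" unfolding C_def using Ks by auto
  have CB: "C \<subseteq> B" using K unfolding C_def by auto
  have "measure M (B - C) \<le> 0"
  proof (rule field_le_epsilon)
    fix e :: real assume "e > 0"
    then obtain n where n: "1 / real (Suc n) < e" by (meson nat_approx_posE)
    have "measure M (B - C) = measure M B - measure M C"
      using CM BM CB by (simp add: finite_measure_Diff)
    also have "measure M (K n) \<le> measure M C"
      using CM Ks unfolding C_def by (intro finite_measure_mono) auto
    then have "measure M B - measure M C < 1 / real (Suc n)" using K[of n] by simp
    finally show "measure M (B - C) \<le> 0 + e" using n by simp
  qed
  then have "B - C \<in> null_sets M"
    using BM CM by (simp add: null_sets_def emeasure_eq_measure measure_nonneg antisym)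
  then show ?thesis using K unfolding C_def by blast
qed

lemma ereal_SUP_rat_below:
  fixes y :: real
  shows "(SUP t\<in>\<rat>. if t < y then ereal t else -\<infinity>) = ereal y"
proof (rule antisym)
  show "(SUP t\<in>\<rat>. if t < y then ereal t else -\<infinity>) \<le> ereal y"
    by (rule SUP_least) auto
  show "ereal y \<le> (SUP t\<in>\<rat>. if t < y then ereal t else -\<infinity>)"
  proof (rule ereal_le_epsilon2)
    fix e :: real assume "e > 0"
    obtain t where t: "t \<in> \<rat>" "y - e < t" "t < y" using Rats_dense_in_real[of "y - e" y] \<open>e>0\<close> by auto
    have "ereal t \<le> (SUP t\<in>\<rat>. if t < y then ereal t else -\<infinity>)"
      using t by (intro SUP_upper2[OF t(1)]) auto
    have "ereal y \<le> ereal t + ereal e" using t by simp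
    also have "\<dots> \<le> (SUP t\<in>\<rat>. if t < y then ereal t else -\<infinity>) + ereal e"
      by (rule add_right_mono) fact
    finally show "ereal y \<le> (SUP t\<in>\<rat>. if t < y then ereal t else -\<infinity>) + ereal e" .
  qed
qed

lemma factor_borel:
  fixes M::"'a::{second_countable_topology, complete_space} measure"
    and \<phi> :: "'a \<Rightarrow> 'b::metric_space" and Y :: "'a \<Rightarrow> real"
  assumes sb: "sets M = sets borel" and fin: "finite_measure M"
    and phi: "continuous_on UNIV \<phi>" and Y: "Y \<in> borel_measurable borel"
    and ae: "AE \<omega> in M. Y \<omega> = \<delta> (\<phi> \<omega>)"
  shows "\<exists>\<delta>'\<in>borel_measurable borel. AE \<omega> in M. Y \<omega> = \<delta>' (\<phi> \<omega>)"
proof -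
  have sp: "space M = UNIV" using sets_eq_imp_space_eq[OF sb] by simp
  from ae obtain N where N: "{x \<in> space M. \<not> Y x = \<delta> (\<phi> x)} \<subseteq> N" "N \<in> null_sets M"
    by (auto elim!: AE_E)
  define G where "G = UNIV - N"
  have GB: "G \<in> sets borel" using N(2) sb sp unfolding G_def by (metis null_setsD2 sets.compl_sets)
  have YG: "\<And>\<omega>. \<omega> \<in> G \<Longrightarrow> Y \<omega> = \<delta> (\<phi> \<omega>)" using N(1) sp unfolding G_def by auto
  define S where "S t = {\<omega>. t < Y \<omega>} \<inter> G" for t
  define T where "T t = {\<omega>. Y \<omega> \<le> t} \<inter> G" for t
  have SB: "S t \<in> sets borel" for t unfolding S_def using Y GB by measurable
  have TB: "T t \<in> sets borel" for t unfolding T_def using Y GB by measurable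
  have "\<forall>t. \<exists>K::nat \<Rightarrow> 'a set. (\<forall>n. compact (K n) \<and> K n \<subseteq> S t) \<and> S t - (\<Union>n. K n) \<in> null_sets M"
    using inner_sigma_compact[OF sb fin SB] by blast
  then have "\<exists>KS::real \<Rightarrow> nat \<Rightarrow> 'a set. \<forall>t. (\<forall>n. compact (KS t n) \<and> KS t n \<subseteq> S t) \<and> S t - (\<Union>n. KS t n) \<in> null_sets M"
    by (rule choice[where Q="\<lambda>t K. (\<forall>n. compact (K n) \<and> K n \<subseteq> S t) \<and> S t - (\<Union>n. K n) \<in> null_sets M"])
  then obtain KS :: "real \<Rightarrow> nat \<Rightarrow> 'a set" where KS0: "\<forall>t. (\<forall>n. compact (KS t n) \<and> KS t n \<subseteq> S t) \<and> S t - (\<Union>n. KS t n) \<in> null_sets M"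
    by (elim exE)
  then have KS: "\<And>t n. compact (KS t n)" "\<And>t n. KS t n \<subseteq> S t"
    "\<And>t. S t - (\<Union>n. KS t n) \<in> null_sets M" by blast+
  have "\<forall>t. \<exists>K::nat \<Rightarrow> 'a set. (\<forall>n. compact (K n) \<and> K n \<subseteq> T t) \<and> T t - (\<Union>n. K n) \<in> null_sets M"
    using inner_sigma_compact[OF sb fin TB] by blast
  then have "\<exists>KT::real \<Rightarrow> nat \<Rightarrow> 'a set. \<forall>t. (\<forall>n. compact (KT t n) \<and> KT t n \<subseteq> T t) \<and> T t - (\<Union>n. KT t n) \<in> null_sets M"
    by (rule choice[where Q="\<lambda>t K. (\<forall>n. compact (K n) \<and> K n \<subseteq> T t) \<and> T t - (\<Union>n. K n) \<in> null_sets M"])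
  then obtain KT :: "real \<Rightarrow> nat \<Rightarrow> 'a set" where KT0: "\<forall>t. (\<forall>n. compact (KT t n) \<and> KT t n \<subseteq> T t) \<and> T t - (\<Union>n. KT t n) \<in> null_sets M"
    by (elim exE)
  then have KT: "\<And>t n. KT t n \<subseteq> T t"
    "\<And>t. T t - (\<Union>n. KT t n) \<in> null_sets M" by blast+
  define E where "E = G \<inter> (\<Inter>t\<in>\<rat>. (\<Union>n. KS t n) \<union> (\<Union>n. KT t n))"
  have nullE: "UNIV - E \<subseteq> N \<union> (\<Union>t\<in>\<rat>. (S t - (\<Union>n. KS t n)) \<union> (T t - (\<Union>n. KT t n)))"
  proof
    fix \<omega> assume w: "\<omega> \<in> UNIV - E"
    show "\<omega> \<in> N \<union> (\<Union>t\<in>\<rat>. (S t - (\<Union>n. KS t n)) \<union> (T t - (\<Union>n. KT t n)))"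
    proof (cases "\<omega> \<in> N")
      case False
      then have wG: "\<omega> \<in> G" unfolding G_def by simp
      with w obtain t where t: "t \<in> \<rat>" "\<omega> \<notin> (\<Union>n. KS t n)" "\<omega> \<notin> (\<Union>n. KT t n)"
        unfolding E_def by blast
      have "\<omega> \<in> S t \<or> \<omega> \<in> T t" using wG unfolding S_def T_def by auto
      then show ?thesis using t by blast
    qed simp
  qed
  have nullU: "N \<union> (\<Union>t\<in>\<rat>. (S t - (\<Union>n. KS t n)) \<union> (T t - (\<Union>n. KT t n))) \<in> null_sets M"
    using N(2) KS(3) KT(2) by (intro null_sets.Un null_sets_UN' countable_rat) auto
  define A where "A t = (\<Union>n. \<phi> ` KS t n)" for t
  have AB: "A t \<in> sets borel" for t
    unfolding A_def
    by (rule sets.countable_UN) (auto intro!: borel_closed compact_imp_closed compact_continuous_image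
        continuous_on_subset[OF phi] KS(1))
  define \<delta>' where "\<delta>' y = real_of_ereal (SUP t\<in>\<rat>. if y \<in> A t then ereal t else -\<infinity>)" for y
  have meas: "\<delta>' \<in> borel_measurable borel"
    unfolding \<delta>'_def
  proof (intro borel_measurable_real_of_ereal borel_measurable_SUP countable_rat)
    fix t show "(\<lambda>y. if y \<in> A t then ereal t else -\<infinity>) \<in> borel_measurable borel"
      using AB[of t] by measurable
  qed
  have key: "Y \<omega> = \<delta>' (\<phi> \<omega>)" if \<omega>: "\<omega> \<in> E" for \<omega>
  proof -
    have wG: "\<omega> \<in> G" using \<omega> unfolding E_def by auto
    have iff: "\<phi> \<omega> \<in> A t \<longleftrightarrow> t < Y \<omega>" if t: "t \<in> \<rat>" for t
    proof
      assume "\<phi> \<omega> \<in> A t"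
      then obtain n \<omega>' where w': "\<omega>' \<in> KS t n" "\<phi> \<omega>' = \<phi> \<omega>" unfolding A_def by auto
      then have "\<omega>' \<in> S t" using KS(2) by blast
      then have "t < Y \<omega>'" "\<omega>' \<in> G" unfolding S_def by auto
      then show "t < Y \<omega>" using YG[OF wG] YG w'(2) by metis
    next
      assume lt: "t < Y \<omega>"
      have "\<omega> \<in> (\<Union>n. KS t n) \<union> (\<Union>n. KT t n)" using \<omega> t unfolding E_def by auto
      moreover have "\<omega> \<notin> (\<Union>n. KT t n)" using KT(1) lt unfolding T_def by fastforce
      ultimately show "\<phi> \<omega> \<in> A t" unfolding A_def by auto
    qed
    have "(SUP t\<in>\<rat>. if \<phi> \<omega> \<in> A t then ereal t else -\<infinity>) = (SUP t\<in>\<rat>. if t < Y \<omega> then ereal t else -\<infinity>)"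
      by (intro SUP_cong refl) (simp add: iff)
    also have "\<dots> = ereal (Y \<omega>)" by (rule ereal_SUP_rat_below)
    finally show ?thesis unfolding \<delta>'_def by simp
  qed
  have "AE \<omega> in M. Y \<omega> = \<delta>' (\<phi> \<omega>)"
  proof (rule AE_I')
    show "{\<omega> \<in> space M. \<not> Y \<omega> = \<delta>' (\<phi> \<omega>)} \<subseteq> N \<union> (\<Union>t\<in>\<rat>. (S t - (\<Union>n. KS t n)) \<union> (T t - (\<Union>n. KT t n)))"
      using key nullE by blast
  qed (rule nullU)
  with meas show ?thesis by blast
qed



lemma abs_le_1sq: "\<bar>a::real\<bar> \<le> 1 + a\<^sup>2"
proof -
  have "0 \<le> (\<bar>a\<bar> - 1)\<^sup>2" by simp
  then have "0 \<le> a\<^sup>2 - 2 * \<bar>a\<bar> + 1" by (simp add: power2_eq_square algebra_simps)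
  then show ?thesis by simp
qed

lemma fiber:
  assumes K: "K \<in> borel_measurable (vimage_algebra S \<phi> N)" and phi: "\<phi> \<in> S \<rightarrow> space N"
    and w: "\<omega> \<in> S" "\<omega>' \<in> S" and eq: "\<phi> \<omega> = \<phi> \<omega>'"
  shows "K \<omega> = (K \<omega>' :: real)"
proof -
  have "K -` {K \<omega>} \<inter> space (vimage_algebra S \<phi> N) \<in> sets (vimage_algebra S \<phi> N)"
    by (rule measurable_sets[OF K]) simp
  then have "K -` {K \<omega>} \<inter> S \<in> {\<phi> -` A \<inter> S | A. A \<in> sets N}"
    using sets_vimage_algebra2[OF phi] by simp
  then obtain A where A: "K -` {K \<omega>} \<inter> S = \<phi> -` A \<inter> S" by blast
  have "\<omega> \<in> \<phi> -` A \<inter> S" using A[symmetric] w by blast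
  then have "\<omega>' \<in> \<phi> -` A \<inter> S" using eq w by simp
  then have "\<omega>' \<in> K -` {K \<omega>} \<inter> S" using A by blast
  then show ?thesis by simp
qed

lemma int_ind: "A \<in> sets M \<Longrightarrow> integrable M f \<Longrightarrow> integrable M (\<lambda>x. indicator A x * (f x::real))"
  using integrable_mult_indicator[of A M f] by simp

lemma fin_subalg:
  assumes "finite_measure M" "f \<in> measurable M N"
  shows "sigma_finite_subalgebra M (vimage_algebra (space M) f N)"
proof (rule finite_measure_subalgebra_is_sigma_finite)
  show "finite_measure_subalgebra M (vimage_algebra (space M) f N)"
    unfolding finite_measure_subalgebra_def finite_measure_subalgebra_axioms_def subalgebra_def
    using assms sets_image_in_sets[OF refl assms(2)] by simp
qed

locale setting =
  fixes f0 :: "real^'p \<Rightarrow> real" and M0 :: "real^'r^'p"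
    and \<Lambda>0 :: "(real \<times> (real^'p)) measure" and Qtr :: "(real^'r) measure"
    and R :: "nat \<Rightarrow> real^'p"
  assumes f0m: "f0 \<in> borel_measurable borel"
    and Lprob: "prob_space \<Lambda>0" and Lsets: "sets \<Lambda>0 = sets borel"
    and Lint: "integrable \<Lambda>0 (\<lambda>w. w)" and Lmean: "(\<integral>w. w \<partial>\<Lambda>0) = 0"
    and Qprob: "prob_space Qtr" and Qsets: "sets Qtr = sets borel"
    and f0sq: "(\<integral>\<^sup>+ \<omega>. ennreal ((f0 (simX M0 \<omega>))\<^sup>2) \<partial>induced \<Lambda>0 Qtr) < \<infinity>"
    and onb: "ker_onb M0 R"
begin

abbreviation "P \<equiv> induced \<Lambda>0 Qtr"

lemma P_prob: "prob_space P"
  unfolding induced_def by (rule prob_space_pair[OF Lprob Qprob])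

lemma P_sets: "sets P = sets borel"
proof -
  have "sets P = sets (borel \<Otimes>\<^sub>M borel :: ('p,'r) sample measure)"
    unfolding induced_def by (rule sets_pair_measure_cong[OF Lsets Qsets])
  also have "\<dots> = sets borel" by (metis borel_prod)
  finally show ?thesis .
qed

lemma P_space: "space P = UNIV"
  using sets_eq_imp_space_eq[OF P_sets] by simp

lemma cont_meas: "continuous_on UNIV g \<Longrightarrow> g \<in> borel_measurable P"
  using borel_measurable_continuous_onI measurable_cong_sets[OF P_sets refl] by blast

lemma borel_meas_P: "g \<in> borel_measurable borel \<Longrightarrow> g \<in> borel_measurable P"
  using measurable_cong_sets[OF P_sets refl] by blast

lemma X_cont: "continuous_on UNIV (simX M0)"
proof -
  have "continuous_on UNIV (\<lambda>x. M0 *v x)" by (rule matrix_vector_mult_linear_continuous_on)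
  then have "continuous_on UNIV (\<lambda>\<omega>::('p,'r) sample. M0 *v snd \<omega>)"
    by (rule continuous_on_compose2[of UNIV _ UNIV snd]) (auto intro: continuous_intros)
  then show ?thesis
    unfolding simX_def[abs_def] simZ_def simV_def by (intro continuous_intros)
qed

lemma V_cont: "continuous_on UNIV simV"
  unfolding simV_def[abs_def] by (intro continuous_intros)

lemma U_cont: "continuous_on UNIV simU"
  unfolding simU_def[abs_def] by (intro continuous_intros)

lemma X_meas: "simX M0 \<in> borel_measurable P" by (rule cont_meas[OF X_cont])
lemma V_meas: "simV \<in> borel_measurable P" by (rule cont_meas[OF V_cont])
lemma U_meas: "simU \<in> borel_measurable P" by (rule cont_meas[OF U_cont])

lemma comp_X_meas: "h \<in> borel_measurable borel \<Longrightarrow> (\<lambda>\<omega>. h (simX M0 \<omega>)) \<in> borel_measurable P"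
  using measurable_comp[OF X_meas, of h borel] by (simp add: comp_def)
lemma comp_V_meas: "h \<in> borel_measurable borel \<Longrightarrow> (\<lambda>\<omega>. h (simV \<omega>)) \<in> borel_measurable P"
  using measurable_comp[OF V_meas, of h borel] by (simp add: comp_def)

lemma distr_fst: "distr P \<Lambda>0 fst = \<Lambda>0"
  unfolding induced_def by (rule prob_space.distr_pair_fst[OF Qprob])

lemma fst_meas: "fst \<in> measurable P \<Lambda>0"
  unfolding induced_def by (rule measurable_fst)

lemma integral_fst_P:
  assumes "F \<in> borel_measurable \<Lambda>0"
  shows "(\<integral>\<omega>. F (fst \<omega>) \<partial>P) = (\<integral>w. (F w :: real) \<partial>\<Lambda>0)"
  using integral_distr[OF fst_meas assms] distr_fst by simp

lemma integrable_fst_P: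
  assumes "F \<in> borel_measurable \<Lambda>0"
  shows "integrable P (\<lambda>\<omega>. F (fst \<omega>)) \<longleftrightarrow> integrable \<Lambda>0 (F :: _ \<Rightarrow> real)"
  using integrable_distr_eq[OF fst_meas assms] distr_fst by simp

lemma U_int: "integrable P simU"
proof -
  have "integrable \<Lambda>0 (\<lambda>w. fst w)" using Lint by (rule integrable_fst)
  moreover have "fst \<in> borel_measurable \<Lambda>0"
    using measurable_cong_sets[OF Lsets refl] borel_measurable_continuous_onI[OF continuous_on_fst[OF continuous_on_id]] by blast
  ultimately show ?thesis
    using integrable_fst_P[of fst] unfolding simU_def[abs_def] by simp
qed

lemma U_mean: "(\<integral>\<omega>. simU \<omega> \<partial>P) = 0"
proof -
  have "fst \<in> borel_measurable \<Lambda>0"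
    using measurable_cong_sets[OF Lsets refl] borel_measurable_continuous_onI[OF continuous_on_fst[OF continuous_on_id]] by blast
  then have "(\<integral>\<omega>. simU \<omega> \<partial>P) = (\<integral>w. fst w \<partial>\<Lambda>0)"
    using integral_fst_P[of fst] unfolding simU_def[abs_def] by simp
  also have "\<dots> = fst (\<integral>w. w \<partial>\<Lambda>0)" using Lint by (rule integral_fst)
  finally show ?thesis using Lmean by simp
qed

lemma f0X_int: "integrable P (\<lambda>\<omega>. f0 (simX M0 \<omega>))"
proof -
  interpret prob_space P by (rule P_prob)
  have m: "(\<lambda>\<omega>. f0 (simX M0 \<omega>)) \<in> borel_measurable P" by (rule comp_X_meas[OF f0m])
  have "(\<integral>\<^sup>+ \<omega>. ennreal (norm (f0 (simX M0 \<omega>))) \<partial>P) \<le> (\<integral>\<^sup>+ \<omega>. 1 + ennreal ((f0 (simX M0 \<omega>))\<^sup>2) \<partial>P)"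
  proof (rule nn_integral_mono)
    fix \<omega>
    have nb: "norm (f0 (simX M0 \<omega>)) \<le> 1 + (f0 (simX M0 \<omega>))\<^sup>2"
      using abs_le_1sq by simp
    show "ennreal (norm (f0 (simX M0 \<omega>))) \<le> 1 + ennreal ((f0 (simX M0 \<omega>))\<^sup>2)"
      using ennreal_leI[OF nb] by (simp add: ennreal_plus)
  qed
  also have "\<dots> = (\<integral>\<^sup>+ \<omega>. 1 \<partial>P) + (\<integral>\<^sup>+ \<omega>. ennreal ((f0 (simX M0 \<omega>))\<^sup>2) \<partial>P)"
    by (rule nn_integral_add) (use m in auto)
  also have "\<dots> < \<infinity>" using f0sq by (simp add: emeasure_space_1)
  finally show ?thesis using m by (simp add: integrable_iff_bounded)
qed

lemma P_fin: "finite_measure P"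
  using P_prob prob_space_def by blast

lemma RT_meas: "RT M0 R \<in> measurable borel (RT_space M0)"
  unfolding RT_def[abs_def] RT_space_def
  by (intro measurable_restrict) (auto intro!: borel_measurable_continuous_onI continuous_intros)

lemma RX_meas: "(\<lambda>\<omega>. RT M0 R (simX M0 \<omega>)) \<in> measurable P (RT_space M0)"
  using measurable_comp[OF X_meas RT_meas] by (simp add: comp_def)

lemma XV_meas: "(\<lambda>\<omega>. (simX M0 \<omega>, simV \<omega>)) \<in> borel_measurable P"
  by (intro cont_meas continuous_on_Pair X_cont V_cont)

lemma sfs_V: "sigma_finite_subalgebra P (sigma_V P)"
  unfolding sigma_V_def by (rule fin_subalg[OF P_fin V_meas])
lemma sfs_XV: "sigma_finite_subalgebra P (sigma_XV M0 P)"
  unfolding sigma_XV_def by (rule fin_subalg[OF P_fin XV_meas])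
lemma sfs_RX: "sigma_finite_subalgebra P (sigma_RX M0 R P)"
  unfolding sigma_RX_def by (rule fin_subalg[OF P_fin RX_meas])

definition "\<psi> v = gamma0V P ((0, v), 0)"

lemma gamma_psi: "gamma0V P \<omega> = \<psi> (simV \<omega>)"
  unfolding \<psi>_def
proof (rule fiber[where S="space P" and \<phi>=simV and N=borel])
  show "gamma0V P \<in> borel_measurable (vimage_algebra (space P) simV borel)"
    unfolding gamma0V_def sigma_V_def[symmetric] by (rule borel_measurable_cond_exp)
qed (auto simp: P_space simV_def)

lemma gamma_fun: "gamma0V P = (\<lambda>\<omega>. \<psi> (simV \<omega>))"
  using gamma_psi by auto

lemma psi_meas: "\<psi> \<in> borel_measurable borel"
proof -
  have g: "gamma0V P \<in> borel_measurable borel"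
    using measurable_cong_sets[OF P_sets refl] unfolding gamma0V_def
    by (metis borel_measurable_cond_exp2)
  have c: "(\<lambda>v::real^'p. (((0::real), v), (0::real^'r))) \<in> measurable borel borel"
    by (intro borel_measurable_continuous_onI continuous_intros)
  show ?thesis using measurable_comp[OF c g] unfolding \<psi>_def[abs_def] comp_def by simp
qed

lemma gamma_int: "integrable P (gamma0V P)"
  unfolding gamma0V_def by (rule sigma_finite_subalgebra.real_cond_exp_int(1)[OF sfs_V U_int])

lemma gamma_mean: "(\<integral>\<omega>. gamma0V P \<omega> \<partial>P) = 0"
  unfolding gamma0V_def using sigma_finite_subalgebra.real_cond_exp_int(2)[OF sfs_V U_int] U_mean by simp

lemma psiV_int: "integrable P (\<lambda>\<omega>. \<psi> (simV \<omega>))"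
  using gamma_int gamma_fun by simp

lemma pair_sf: "pair_sigma_finite \<Lambda>0 Qtr"
  by (simp add: pair_sigma_finite_def prob_space_imp_sigma_finite Lprob Qprob)

lemma key1: "AE \<omega> in P. real_cond_exp P (sigma_XV M0 P) (simY f0 M0) \<omega> = f0 (simX M0 \<omega>) + \<psi> (simV \<omega>)"
proof (rule sigma_finite_subalgebra.real_cond_exp_charact[OF sfs_XV])
  show "integrable P (simY f0 M0)" unfolding simY_def[abs_def] using f0X_int U_int by (rule Bochner_Integration.integrable_add)
  show "integrable P (\<lambda>\<omega>. f0 (simX M0 \<omega>) + \<psi> (simV \<omega>))" using f0X_int psiV_int by (rule Bochner_Integration.integrable_add)
  show "(\<lambda>\<omega>. f0 (simX M0 \<omega>) + \<psi> (simV \<omega>)) \<in> borel_measurable (sigma_XV M0 P)"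
  proof -
    have G: "(\<lambda>p::((real^'p) \<times> (real^'p)). f0 (fst p) + \<psi> (snd p)) \<in> borel_measurable borel"
    proof (rule borel_measurable_add)
      show "(\<lambda>p::((real^'p) \<times> (real^'p)). f0 (fst p)) \<in> borel_measurable borel"
        using measurable_comp[OF borel_measurable_continuous_onI[OF continuous_on_fst[OF continuous_on_id]] f0m]
        by (simp add: comp_def)
      show "(\<lambda>p::((real^'p) \<times> (real^'p)). \<psi> (snd p)) \<in> borel_measurable borel"
        using measurable_comp[OF borel_measurable_continuous_onI[OF continuous_on_snd[OF continuous_on_id]] psi_meas]
        by (simp add: comp_def)
    qed
    have "(\<lambda>\<omega>. (simX M0 \<omega>, simV \<omega>)) \<in> measurable (sigma_XV M0 P) borel"
      unfolding sigma_XV_def by (rule measurable_vimage_algebra1) simp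
    from measurable_comp[OF this G] show ?thesis by (simp add: comp_def)
  qed
  fix A assume "A \<in> sets (sigma_XV M0 P)"
  then obtain D where D: "D \<in> sets borel" "A = (\<lambda>\<omega>. (simX M0 \<omega>, simV \<omega>)) -` D \<inter> space P"
    unfolding sigma_XV_def using sets_vimage_algebra2[of "\<lambda>\<omega>. (simX M0 \<omega>, simV \<omega>)" "space P" borel] by auto
  have AP: "A \<in> sets P" using D XV_meas measurable_sets by blast
  define F where "F \<omega> = indicator A \<omega> * (simU \<omega> - \<psi> (simV \<omega>))" for \<omega>
  have Fint: "integrable P F" unfolding F_def
    by (rule int_ind[OF AP]) (intro Bochner_Integration.integrable_diff U_int psiV_int)
  have F0: "integral\<^sup>L P F = 0"
  proof -
    interpret pair_sigma_finite \<Lambda>0 Qtr by (rule pair_sf)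
    have "integrable (\<Lambda>0 \<Otimes>\<^sub>M Qtr) (case_prod (\<lambda>w z. F (w,z)))" using Fint unfolding induced_def by simp
    from integral_snd[OF this]
    have "integral\<^sup>L P F = (\<integral>z. (\<integral>w. F (w,z) \<partial>\<Lambda>0) \<partial>Qtr)"
      unfolding induced_def by simp
    also have "\<dots> = (\<integral>z. 0 \<partial>Qtr)"
    proof (rule Bochner_Integration.integral_cong[OF refl])
      fix z
      define B where "B = {v. (M0 *v z + v, v) \<in> D}"
      have B: "B \<in> sets borel"
      proof -
        have c: "(\<lambda>v. (M0 *v z + v, v)) \<in> borel_measurable borel"
          by (intro borel_measurable_continuous_onI continuous_intros)
        have "(\<lambda>v. (M0 *v z + v, v)) -` D \<inter> space borel \<in> sets borel"
          by (rule measurable_sets[OF c D(1)])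
        then show ?thesis unfolding B_def by (simp add: vimage_def)
      qed
      define G where "G w = indicator B (snd w) * (fst w - \<psi> (snd w))" for w :: "real \<times> (real^'p)"
      have FG: "F (w,z) = G w" for w
        unfolding F_def G_def D(2) B_def P_space simX_def simV_def simZ_def simU_def
        by (simp add: indicator_def)
      have Gm: "G \<in> borel_measurable \<Lambda>0"
      proof -
        have s: "(\<lambda>w::real \<times> (real^'p). snd w) \<in> borel_measurable borel"
          by (intro borel_measurable_continuous_onI continuous_intros)
        have f: "(\<lambda>w::real \<times> (real^'p). fst w) \<in> borel_measurable borel"
          by (intro borel_measurable_continuous_onI continuous_intros)
        have ps: "(\<lambda>w::real \<times> (real^'p). \<psi> (snd w)) \<in> borel_measurable borel"
          using measurable_comp[OF s psi_meas] by (simp add: comp_def)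
        have ib: "(\<lambda>w::real \<times> (real^'p). indicator B (snd w) :: real) \<in> borel_measurable borel"
          using measurable_comp[OF s borel_measurable_indicator[OF B]] by (simp add: comp_def)
        have "G \<in> borel_measurable borel" unfolding G_def
          by (intro borel_measurable_times borel_measurable_diff ib f ps)
        then show ?thesis using measurable_cong_sets[OF Lsets refl] by blast
      qed
      define A' where "A' = simV -` B \<inter> space P"
      have A'V: "A' \<in> sets (sigma_V P)" unfolding A'_def sigma_V_def by (rule in_vimage_algebra[OF B])
      have A'P: "A' \<in> sets P" unfolding A'_def using B V_meas measurable_sets by blast
      have GA: "G (fst \<omega>) = indicator A' \<omega> * simU \<omega> - indicator A' \<omega> * gamma0V P \<omega>" for \<omega>
        unfolding G_def A'_def gamma_psi P_space simU_def simV_def by (simp add: indicator_def)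
      have "(\<integral>w. F (w,z) \<partial>\<Lambda>0) = (\<integral>w. G w \<partial>\<Lambda>0)" using FG by simp
      also have "\<dots> = (\<integral>\<omega>. G (fst \<omega>) \<partial>P)" using integral_fst_P[OF Gm] by simp
      also have "\<dots> = (\<integral>\<omega>. indicator A' \<omega> * simU \<omega> \<partial>P) - (\<integral>\<omega>. indicator A' \<omega> * gamma0V P \<omega> \<partial>P)"
        unfolding GA
        by (intro Bochner_Integration.integral_diff int_ind[OF A'P] U_int gamma_int)
      also have "\<dots> = (\<integral>\<omega>\<in>A'. simU \<omega> \<partial>P) - (\<integral>\<omega>\<in>A'. gamma0V P \<omega> \<partial>P)"
        by (simp add: set_lebesgue_integral_def)
      also have "\<dots> = 0"
        using sigma_finite_subalgebra.real_cond_exp_intA[OF sfs_V U_int A'V] unfolding gamma0V_def by simp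
      finally show "(\<integral>w. F (w,z) \<partial>\<Lambda>0) = 0" .
    qed
    finally show ?thesis by simp
  qed
  have I1: "integrable P (\<lambda>\<omega>. indicator A \<omega> * (f0 (simX M0 \<omega>) + \<psi> (simV \<omega>)))"
    by (rule int_ind[OF AP]) (rule Bochner_Integration.integrable_add[OF f0X_int psiV_int])
  have "(\<integral>\<omega>\<in>A. simY f0 M0 \<omega> \<partial>P) = (\<integral>\<omega>. indicator A \<omega> * (f0 (simX M0 \<omega>) + \<psi> (simV \<omega>)) + F \<omega> \<partial>P)"
    unfolding set_lebesgue_integral_def F_def simY_def by (intro Bochner_Integration.integral_cong refl) (simp add: algebra_simps)
  also have "\<dots> = (\<integral>\<omega>. indicator A \<omega> * (f0 (simX M0 \<omega>) + \<psi> (simV \<omega>)) \<partial>P) + integral\<^sup>L P F"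
    by (rule Bochner_Integration.integral_add[OF I1 Fint])
  finally show "(\<integral>\<omega>\<in>A. simY f0 M0 \<omega> \<partial>P) = (\<integral>\<omega>\<in>A. f0 (simX M0 \<omega>) + \<psi> (simV \<omega>) \<partial>P)"
    using F0 by (simp add: set_lebesgue_integral_def)
qed

abbreviation "nn \<equiv> CARD('p) - rank M0"

definition "Lm (y::nat \<Rightarrow> real) = (\<Sum>j<nn. y j *\<^sub>R R j)"
definition "Pi_op x = Lm (RT M0 R x)"

lemma orth: "i < nn \<Longrightarrow> j < nn \<Longrightarrow> R i \<bullet> R j = (if i = j then 1 else 0)"
  using onb unfolding ker_onb_def Let_def by blast

lemma RT_Pi: "RT M0 R (Pi_op x) = RT M0 R x"
proof -
  have "R j \<bullet> Pi_op x = R j \<bullet> x" if j: "j < nn" for j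
  proof -
    have "R j \<bullet> Pi_op x = (\<Sum>i<nn. (R i \<bullet> x) * (R j \<bullet> R i))"
      unfolding Pi_op_def Lm_def RT_def by (simp add: inner_sum_right)
    also have "\<dots> = (\<Sum>i<nn. if i = j then R j \<bullet> x else 0)"
      by (intro sum.cong refl) (auto simp: orth j)
    also have "\<dots> = R j \<bullet> x" using j by simp
    finally show ?thesis .
  qed
  then show ?thesis unfolding RT_def by (intro ext) simp
qed

lemma Lm_meas: "Lm \<in> borel_measurable (RT_space M0)"
  unfolding Lm_def[abs_def] RT_space_def
proof (intro borel_measurable_sum borel_measurable_scaleR borel_measurable_const)
  fix j assume "j \<in> {..<nn}"
  then show "(\<lambda>y. y j) \<in> borel_measurable (Pi\<^sub>M {..<nn} (\<lambda>j. borel))"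
    by (rule measurable_component_singleton)
qed

lemma Pi_cont: "continuous_on UNIV Pi_op"
  unfolding Pi_op_def[abs_def] Lm_def RT_def
  by (intro continuous_intros) (auto intro: continuous_on_inner continuous_on_const continuous_on_id)

lemma condexp_self:
  assumes hm: "h \<in> borel_measurable borel"
    and hint: "integrable P (\<lambda>\<omega>. h (simX M0 \<omega>))"
    and ae: "AE \<omega> in P. h (simX M0 \<omega>) = \<delta> (RT M0 R (simX M0 \<omega>))"
  shows "AE \<omega> in P. real_cond_exp P (sigma_RX M0 R P) (\<lambda>\<omega>. h (simX M0 \<omega>)) \<omega> = h (simX M0 \<omega>)"
proof -
  have ae': "AE \<omega> in P. h (simX M0 \<omega>) = (\<lambda>y. \<delta> (RT M0 R y)) ((\<lambda>\<omega>. Pi_op (simX M0 \<omega>)) \<omega>)"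
    using ae by (simp add: RT_Pi)
  have c: "continuous_on UNIV (\<lambda>\<omega>. Pi_op (simX M0 \<omega>))"
    by (rule continuous_on_compose2[OF Pi_cont X_cont]) auto
  have Ym: "(\<lambda>\<omega>. h (simX M0 \<omega>)) \<in> borel_measurable borel"
    using measurable_comp[OF borel_measurable_continuous_onI[OF X_cont] hm] by (simp add: comp_def)
  obtain \<delta>' where d': "\<delta>' \<in> borel_measurable borel"
    and ae2: "AE \<omega> in P. h (simX M0 \<omega>) = \<delta>' (Pi_op (simX M0 \<omega>))"
    using factor_borel[OF P_sets P_fin c Ym ae'] by blast
  define K where "K \<omega> = \<delta>' (Lm (RT M0 R (simX M0 \<omega>)))" for \<omega>
  have KF: "K \<in> borel_measurable (sigma_RX M0 R P)"
  proof -
    have "(\<lambda>\<omega>. RT M0 R (simX M0 \<omega>)) \<in> measurable (sigma_RX M0 R P) (RT_space M0)"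
      unfolding sigma_RX_def by (rule measurable_vimage_algebra1) (use measurable_space[OF RX_meas] in blast)
    from measurable_comp[OF measurable_comp[OF this Lm_meas] d'] show ?thesis
      unfolding K_def comp_def .
  qed
  have KP: "K \<in> borel_measurable P"
    using measurable_comp[OF measurable_comp[OF RX_meas Lm_meas] d'] unfolding K_def comp_def .
  have aeK: "AE \<omega> in P. h (simX M0 \<omega>) = K \<omega>"
    using ae2 unfolding K_def Pi_op_def by simp
  have Kint: "integrable P K"
    using integrable_cong_AE[OF comp_X_meas[OF hm] KP aeK] hint by simp
  have "AE \<omega> in P. real_cond_exp P (sigma_RX M0 R P) (\<lambda>\<omega>. h (simX M0 \<omega>)) \<omega> = real_cond_exp P (sigma_RX M0 R P) K \<omega>"
    by (rule sigma_finite_subalgebra.real_cond_exp_cong[OF sfs_RX aeK comp_X_meas[OF hm] KP])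
  moreover have "AE \<omega> in P. real_cond_exp P (sigma_RX M0 R P) K \<omega> = K \<omega>"
    by (rule sigma_finite_subalgebra.real_cond_exp_F_meas[OF sfs_RX Kint KF])
  ultimately show ?thesis using aeK by eventually_elim simp
qed

lemma arctan_comp_meas: "h \<in> borel_measurable borel \<Longrightarrow> (\<lambda>x. arctan (h x)) \<in> borel_measurable borel"
  using measurable_comp[OF _ borel_measurable_arctan, of h borel] by (simp add: comp_def)

lemma bounded_int: "g \<in> borel_measurable borel \<Longrightarrow> integrable P (\<lambda>\<omega>. arctan (g (simV \<omega>)))"
proof -
  assume gm: "g \<in> borel_measurable borel"
  interpret finite_measure P by (rule P_fin)
  show ?thesis
  proof (rule integrable_const_bound[where B="pi/2"])
    show "AE \<omega> in P. norm (arctan (g (simV \<omega>))) \<le> pi/2"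
    proof (intro AE_I2)
      fix \<omega> show "norm (arctan (g (simV \<omega>))) \<le> pi/2"
        using arctan_bounded[of "g (simV \<omega>)"] unfolding real_norm_def abs_le_iff by linarith
    qed
    show "(\<lambda>\<omega>. arctan (g (simV \<omega>))) \<in> borel_measurable P"
      by (rule comp_V_meas[OF arctan_comp_meas[OF gm]])
  qed
qed

lemma ident_iff: "(AE \<omega> in P. real_cond_exp P (sigma_XV M0 P) (simY f0 M0) \<omega> = f (simX M0 \<omega>) + \<gamma> (simV \<omega>))
   \<longleftrightarrow> (AE \<omega> in P. f0 (simX M0 \<omega>) + \<psi> (simV \<omega>) = f (simX M0 \<omega>) + \<gamma> (simV \<omega>))"
proof
  assume "AE \<omega> in P. real_cond_exp P (sigma_XV M0 P) (simY f0 M0) \<omega> = f (simX M0 \<omega>) + \<gamma> (simV \<omega>)"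
  with key1 show "AE \<omega> in P. f0 (simX M0 \<omega>) + \<psi> (simV \<omega>) = f (simX M0 \<omega>) + \<gamma> (simV \<omega>)"
    by eventually_elim simp
next
  assume "AE \<omega> in P. f0 (simX M0 \<omega>) + \<psi> (simV \<omega>) = f (simX M0 \<omega>) + \<gamma> (simV \<omega>)"
  with key1 show "AE \<omega> in P. real_cond_exp P (sigma_XV M0 P) (simY f0 M0) \<omega> = f (simX M0 \<omega>) + \<gamma> (simV \<omega>)"
    by eventually_elim simp
qed

lemma main: "BCF_identifiable f0 M0 R P \<longleftrightarrow>
    (\<forall>h \<in> borel_measurable (borel :: (real^'p) measure).
     \<forall>g \<in> borel_measurable (borel :: (real^'p) measure).
       (AE \<omega> in P. h (simX M0 \<omega>) + g (simV \<omega>) = 0) \<longrightarrow>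
       (if rank M0 < CARD('p) then
          (\<exists>\<delta> :: (nat \<Rightarrow> real) \<Rightarrow> real. AE \<omega> in P. h (simX M0 \<omega>) = \<delta> (RT M0 R (simX M0 \<omega>)))
        else
          (\<exists>c :: real. AE \<omega> in P. h (simX M0 \<omega>) = c)))" (is "?L \<longleftrightarrow> ?R")
proof
  assume ident: ?L
  show ?R
  proof (intro ballI impI)
    fix h g :: "real^'p \<Rightarrow> real"
    assume hm: "h \<in> borel_measurable borel" and gm: "g \<in> borel_measurable borel"
      and ae0: "AE \<omega> in P. h (simX M0 \<omega>) + g (simV \<omega>) = 0"
    define ht where "ht x = arctan (h x)" for x
    define gt where "gt v = arctan (- g v)" for v
    have ae1: "AE \<omega> in P. ht (simX M0 \<omega>) = gt (simV \<omega>)"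
      using ae0
    proof eventually_elim
      case (elim \<omega>)
      then have "h (simX M0 \<omega>) = - g (simV \<omega>)" by linarith
      then show ?case by (simp add: ht_def gt_def)
    qed
    define f where "f x = f0 x - ht x" for x
    define \<gamma> where "\<gamma> v = \<psi> v + gt v" for v
    have htm: "ht \<in> borel_measurable borel" unfolding ht_def[abs_def] by (rule arctan_comp_meas[OF hm])
    have mgm: "(\<lambda>v. - g v) \<in> borel_measurable borel" using gm by (rule borel_measurable_uminus)
    have gtm: "gt \<in> borel_measurable borel" unfolding gt_def[abs_def] by (rule arctan_comp_meas[OF mgm])
    have fm: "f \<in> borel_measurable borel" unfolding f_def[abs_def] using f0m htm by (rule borel_measurable_diff)
    have \<gamma>m: "\<gamma> \<in> borel_measurable borel" unfolding \<gamma>_def[abs_def] using psi_meas gtm by (rule borel_measurable_add)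
    have gtint: "integrable P (\<lambda>\<omega>. gt (simV \<omega>))" unfolding gt_def using bounded_int[OF mgm] .
    have \<gamma>int: "integrable P (\<lambda>\<omega>. \<gamma> (simV \<omega>))"
      unfolding \<gamma>_def using Bochner_Integration.integrable_add[OF psiV_int gtint] .
    have prem: "AE \<omega> in P. real_cond_exp P (sigma_XV M0 P) (simY f0 M0) \<omega> = f (simX M0 \<omega>) + \<gamma> (simV \<omega>)"
      unfolding ident_iff using ae1 by eventually_elim (simp add: f_def \<gamma>_def)
    have concl: "if rank M0 < CARD('p) then
           (AE \<omega> in P. fstarX f0 M0 R P \<omega> = f (simX M0 \<omega>) + real_cond_exp P (sigma_RX M0 R P) (\<lambda>\<omega>'. \<gamma> (simV \<omega>')) \<omega>)
         else
           (AE \<omega> in P. fstarX f0 M0 R P \<omega> = f (simX M0 \<omega>) + (\<integral>\<omega>'. \<gamma> (simV \<omega>') \<partial>P))"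
      using ident fm \<gamma>m \<gamma>int prem unfolding BCF_identifiable_def by blast
    have htan: "h x = tan (ht x)" for x unfolding ht_def by (simp add: tan_arctan)
    show "if rank M0 < CARD('p) then
          (\<exists>\<delta> :: (nat \<Rightarrow> real) \<Rightarrow> real. AE \<omega> in P. h (simX M0 \<omega>) = \<delta> (RT M0 R (simX M0 \<omega>)))
        else
          (\<exists>c :: real. AE \<omega> in P. h (simX M0 \<omega>) = c)"
    proof (cases "rank M0 < CARD('p)")
      case True
      define K where "K = real_cond_exp P (sigma_RX M0 R P) (\<lambda>\<omega>. gt (simV \<omega>))"
      have c1: "AE \<omega> in P. f0 (simX M0 \<omega>) + real_cond_exp P (sigma_RX M0 R P) (gamma0V P) \<omega>
          = f (simX M0 \<omega>) + real_cond_exp P (sigma_RX M0 R P) (\<lambda>\<omega>'. \<gamma> (simV \<omega>')) \<omega>"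
        using concl True unfolding fstarX_def by simp
      have fun_eq: "(\<lambda>\<omega>'. \<gamma> (simV \<omega>')) = (\<lambda>\<omega>. gamma0V P \<omega> + gt (simV \<omega>))"
        unfolding \<gamma>_def gamma_fun by simp
      have add: "AE \<omega> in P. real_cond_exp P (sigma_RX M0 R P) (\<lambda>\<omega>'. \<gamma> (simV \<omega>')) \<omega> =
          real_cond_exp P (sigma_RX M0 R P) (gamma0V P) \<omega> + K \<omega>"
        unfolding fun_eq K_def by (rule sigma_finite_subalgebra.real_cond_exp_add[OF sfs_RX gamma_int gtint])
      have aeK: "AE \<omega> in P. ht (simX M0 \<omega>) = K \<omega>"
        using c1 add by eventually_elim (simp add: f_def)
      have KF: "K \<in> borel_measurable (vimage_algebra (space P) (\<lambda>\<omega>. RT M0 R (simX M0 \<omega>)) (RT_space M0))"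
        unfolding K_def sigma_RX_def[symmetric] by (rule borel_measurable_cond_exp)
      define \<delta> where "\<delta> y = tan (K (SOME \<omega>. RT M0 R (simX M0 \<omega>) = y))" for y
      have "AE \<omega> in P. h (simX M0 \<omega>) = \<delta> (RT M0 R (simX M0 \<omega>))"
        using aeK
      proof eventually_elim
        case (elim \<omega>)
        define \<omega>' where "\<omega>' = (SOME \<omega>'. RT M0 R (simX M0 \<omega>') = RT M0 R (simX M0 \<omega>))"
        have eq: "RT M0 R (simX M0 \<omega>') = RT M0 R (simX M0 \<omega>)"
          unfolding \<omega>'_def by (rule someI) (rule refl)
        have "K \<omega>' = K \<omega>"
          by (rule fiber[OF KF _ _ _ eq]) (use measurable_space[OF RX_meas] in \<open>auto simp: P_space\<close>)
        then show ?case using elim unfolding \<delta>_def htan \<omega>'_def[symmetric] by simp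
      qed
      then show ?thesis using True by auto
    next
      case False
      have "AE \<omega> in P. f0 (simX M0 \<omega>) = f (simX M0 \<omega>) + (\<integral>\<omega>'. \<gamma> (simV \<omega>') \<partial>P)"
        using concl False unfolding fstarX_def by simp
      then have "AE \<omega> in P. ht (simX M0 \<omega>) = (\<integral>\<omega>'. \<gamma> (simV \<omega>') \<partial>P)"
        by eventually_elim (simp add: f_def)
      then have "AE \<omega> in P. h (simX M0 \<omega>) = tan (\<integral>\<omega>'. \<gamma> (simV \<omega>') \<partial>P)"
        by eventually_elim (simp add: htan)
      then show ?thesis using False by auto
    qed
  qed
next
  assume cond: ?R
  show ?L
    unfolding BCF_identifiable_def
  proof (intro ballI impI)
    fix f \<gamma> :: "real^'p \<Rightarrow> real"
    assume fm: "f \<in> borel_measurable borel" and \<gamma>m: "\<gamma> \<in> borel_measurable borel"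
      and \<gamma>int: "integrable P (\<lambda>\<omega>. \<gamma> (simV \<omega>))"
      and ae: "AE \<omega> in P. real_cond_exp P (sigma_XV M0 P) (simY f0 M0) \<omega> = f (simX M0 \<omega>) + \<gamma> (simV \<omega>)"
    have ae2: "AE \<omega> in P. f0 (simX M0 \<omega>) + \<psi> (simV \<omega>) = f (simX M0 \<omega>) + \<gamma> (simV \<omega>)"
      using ae unfolding ident_iff .
    define h where "h x = f0 x - f x" for x
    define g where "g v = \<psi> v - \<gamma> v" for v
    have hm: "h \<in> borel_measurable borel" unfolding h_def[abs_def] using f0m fm by (rule borel_measurable_diff)
    have gm: "g \<in> borel_measurable borel" unfolding g_def[abs_def] using psi_meas \<gamma>m by (rule borel_measurable_diff)
    have ae3: "AE \<omega> in P. h (simX M0 \<omega>) + g (simV \<omega>) = 0"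
      using ae2 by eventually_elim (simp add: h_def g_def)
    have C: "if rank M0 < CARD('p) then
          (\<exists>\<delta> :: (nat \<Rightarrow> real) \<Rightarrow> real. AE \<omega> in P. h (simX M0 \<omega>) = \<delta> (RT M0 R (simX M0 \<omega>)))
        else
          (\<exists>c :: real. AE \<omega> in P. h (simX M0 \<omega>) = c)"
      using cond hm gm ae3 by blast
    have aeg: "AE \<omega> in P. \<gamma> (simV \<omega>) = gamma0V P \<omega> + h (simX M0 \<omega>)"
      using ae2 by eventually_elim (simp add: h_def gamma_psi)
    have hXm: "(\<lambda>\<omega>. h (simX M0 \<omega>)) \<in> borel_measurable P" by (rule comp_X_meas[OF hm])
    have g0m: "gamma0V P \<in> borel_measurable P" unfolding gamma0V_def by (rule borel_measurable_cond_exp2)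
    have \<gamma>Vm: "(\<lambda>\<omega>. \<gamma> (simV \<omega>)) \<in> borel_measurable P" by (rule comp_V_meas[OF \<gamma>m])
    have aeh: "AE \<omega> in P. h (simX M0 \<omega>) = \<gamma> (simV \<omega>) - gamma0V P \<omega>"
      using aeg by eventually_elim simp
    have hint: "integrable P (\<lambda>\<omega>. h (simX M0 \<omega>))"
      using integrable_cong_AE[OF hXm _ aeh] Bochner_Integration.integrable_diff[OF \<gamma>int gamma_int] \<gamma>Vm g0m
      by (simp add: borel_measurable_diff)
    show "if rank M0 < CARD('p) then
           (AE \<omega> in P. fstarX f0 M0 R P \<omega> = f (simX M0 \<omega>) + real_cond_exp P (sigma_RX M0 R P) (\<lambda>\<omega>'. \<gamma> (simV \<omega>')) \<omega>)
         else
           (AE \<omega> in P. fstarX f0 M0 R P \<omega> = f (simX M0 \<omega>) + (\<integral>\<omega>'. \<gamma> (simV \<omega>') \<partial>P))"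
    proof (cases "rank M0 < CARD('p)")
      case True
      then obtain \<delta> :: "(nat \<Rightarrow> real) \<Rightarrow> real" where d: "AE \<omega> in P. h (simX M0 \<omega>) = \<delta> (RT M0 R (simX M0 \<omega>))"
        using C by auto
      let ?CE = "real_cond_exp P (sigma_RX M0 R P)"
      have e1: "AE \<omega> in P. ?CE (\<lambda>\<omega>'. \<gamma> (simV \<omega>')) \<omega> = ?CE (\<lambda>\<omega>. gamma0V P \<omega> + h (simX M0 \<omega>)) \<omega>"
        by (rule sigma_finite_subalgebra.real_cond_exp_cong[OF sfs_RX aeg \<gamma>Vm])
          (intro borel_measurable_add g0m hXm)
      have e2: "AE \<omega> in P. ?CE (\<lambda>\<omega>. gamma0V P \<omega> + h (simX M0 \<omega>)) \<omega> = ?CE (gamma0V P) \<omega> + ?CE (\<lambda>\<omega>. h (simX M0 \<omega>)) \<omega>"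
        by (rule sigma_finite_subalgebra.real_cond_exp_add[OF sfs_RX gamma_int hint])
      have e3: "AE \<omega> in P. ?CE (\<lambda>\<omega>. h (simX M0 \<omega>)) \<omega> = h (simX M0 \<omega>)"
        by (rule condexp_self[OF hm hint d])
      have "AE \<omega> in P. fstarX f0 M0 R P \<omega> = f (simX M0 \<omega>) + ?CE (\<lambda>\<omega>'. \<gamma> (simV \<omega>')) \<omega>"
        using e1 e2 e3 by eventually_elim (simp add: fstarX_def True h_def)
      then show ?thesis using True by simp
    next
      case False
      then obtain c where c: "AE \<omega> in P. h (simX M0 \<omega>) = c" using C by auto
      interpret prob_space P by (rule P_prob)
      have "(\<integral>\<omega>. \<gamma> (simV \<omega>) \<partial>P) = (\<integral>\<omega>. gamma0V P \<omega> + c \<partial>P)"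
        by (rule integral_cong_AE[OF \<gamma>Vm]) (use aeg c in \<open>auto intro: borel_measurable_add g0m elim: AE_mp\<close>)
      also have "\<dots> = (\<integral>\<omega>. gamma0V P \<omega> \<partial>P) + (\<integral>\<omega>. c \<partial>P)"
        by (rule Bochner_Integration.integral_add[OF gamma_int]) simp
      also have "\<dots> = c" using gamma_mean by (simp add: prob_space)
      finally have ic: "(\<integral>\<omega>. \<gamma> (simV \<omega>) \<partial>P) = c" .
      have "AE \<omega> in P. fstarX f0 M0 R P \<omega> = f (simX M0 \<omega>) + (\<integral>\<omega>'. \<gamma> (simV \<omega>') \<partial>P)"
        using c by eventually_elim (simp add: fstarX_def False h_def ic)
      then show ?thesis using False by simp
    qed
  qed
qed

end


theorem proposition2:
  fixes f0 :: "real^'p \<Rightarrow> real"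
    and M0 :: "real^'r^'p"
    and \<Lambda>0 :: "(real \<times> (real^'p)) measure"
    and Q0 :: "(real^'r) measure set"
    and Qtr :: "(real^'r) measure"
    and R :: "nat \<Rightarrow> real^'p"
  assumes simdg: "SIMDG f0 M0 \<Lambda>0 Q0"
    and sup_fin: "sup_second_moment_finite f0 M0 \<Lambda>0 Q0"
    and Qtr_in: "Qtr \<in> Q0"
    and Qtr_tr: "training_distribution Qtr"
    and R_onb: "ker_onb M0 R"
  shows "BCF_identifiable f0 M0 R (induced \<Lambda>0 Qtr) \<longleftrightarrow>
    (\<forall>h \<in> borel_measurable (borel :: (real^'p) measure).
     \<forall>g \<in> borel_measurable (borel :: (real^'p) measure).
       (AE \<omega> in induced \<Lambda>0 Qtr. h (simX M0 \<omega>) + g (simV \<omega>) = 0) \<longrightarrow>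
       (if rank M0 < CARD('p) then
          (\<exists>\<delta> :: (nat \<Rightarrow> real) \<Rightarrow> real. AE \<omega> in induced \<Lambda>0 Qtr. h (simX M0 \<omega>) = \<delta> (RT M0 R (simX M0 \<omega>)))
        else
          (\<exists>c :: real. AE \<omega> in induced \<Lambda>0 Qtr. h (simX M0 \<omega>) = c)))"
proof -
  have "setting f0 M0 \<Lambda>0 Qtr R"
  proof (rule setting.intro)
    show "f0 \<in> borel_measurable borel" "prob_space \<Lambda>0" "sets \<Lambda>0 = sets borel"
      "integrable \<Lambda>0 (\<lambda>w. w)" "(\<integral>w. w \<partial>\<Lambda>0) = 0"
      using simdg unfolding SIMDG_def by auto
    show "prob_space Qtr" "sets Qtr = sets borel"
      using simdg Qtr_in unfolding SIMDG_def by auto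
    show "ker_onb M0 R" by (rule R_onb)
    have "(\<integral>\<^sup>+ \<omega>. ennreal ((f0 (simX M0 \<omega>))\<^sup>2) \<partial>induced \<Lambda>0 Qtr)
        \<le> (SUP Q\<in>Q0. (\<integral>\<^sup>+ \<omega>. ennreal ((f0 (simX M0 \<omega>))\<^sup>2) \<partial>induced \<Lambda>0 Q))"
      by (rule SUP_upper[OF Qtr_in])
    then show "(\<integral>\<^sup>+ \<omega>. ennreal ((f0 (simX M0 \<omega>))\<^sup>2) \<partial>induced \<Lambda>0 Qtr) < \<infinity>"
      using sup_fin unfolding sup_second_moment_finite_def by (rule le_less_trans)
  qed
  then show ?thesis by (rule setting.main)
qed

end
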